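(* Let $\Omega\subset\mathbb{R}^n$ be a domain with $\mathrm{width}(\Omega)<+\infty$, $f\in L^\infty(\Omega)$, $g\in C(\partial\Omega)\cap L^\infty(\partial\Omega)$, $(\varepsilon_i)$ a sequence of positive numbers with $\varepsilon_i\to0$, and for each $i$ let $u_i:\overline\Omega\to\mathbb{R}$ be a bounded solution of $\Delta^{\varepsilon_i}_\infty u_i=\varepsilon_i^2 f$ in $\Omega$, $u_i=g$ on $\partial\Omega$. Then the functions $u_i$ are uniformly bounded, i.e. $\sup_i\sup_{\overline\Omega}|u_i|<+\infty$.
   Context: $d(x,y)$ is the intrinsic metric of $\overline\Omega$ (infimum of lengths of paths in $\overline\Omega$ from $x$ to $y$); $\mathrm{width}(\Omega)=\sup_{x\in\Omega}\inf_{y\in\partial\Omega}d(y,x)$. For $\varepsilon>0$, $B_x(\varepsilon)=\{y\in\overline\Omega: d(x,y)<\varepsilon\}$ and $\Delta^{\varepsilon}_\infty w(x)=\inf_{y\in B_x(\varepsilon)}w(y)+\sup_{y\in B_x(\varepsilon)}w(y)-2w(x)$. *)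

theory Defs
  imports "HOL-Analysis.Analysis"
begin

definition path_length :: "(real \<Rightarrow> 'a::real_normed_vector) \<Rightarrow> ereal" where
  "path_length \<gamma> =
     (SUP p \<in> {(n::nat, t::nat \<Rightarrow> real). t 0 = 0 \<and> t n = 1 \<and> (\<forall>k<n. t k \<le> t (Suc k))}.
        ereal (\<Sum>k<fst p. norm (\<gamma> (snd p (Suc k)) - \<gamma> (snd p k))))"

text \<open>Intrinsic metric of the closure of \<Omega>: infimum of lengths of paths in
  closure \<Omega> from x to y (infinite if there is no such path of finite length).\<close>
definition intrinsic_dist :: "'a::euclidean_space set \<Rightarrow> 'a \<Rightarrow> 'a \<Rightarrow> ereal" where
  "intrinsic_dist \<Omega> x y =
     (INF \<gamma> \<in> {\<gamma>. path \<gamma> \<and> path_image \<gamma> \<subseteq> closure \<Omega> \<and> pathstart \<gamma> = x \<and> pathfinish \<gamma> = y}.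
        path_length \<gamma>)"

definition width :: "'a::euclidean_space set \<Rightarrow> ereal" where
  "width \<Omega> = (SUP x \<in> \<Omega>. INF y \<in> frontier \<Omega>. intrinsic_dist \<Omega> y x)"

definition intr_ball :: "'a::euclidean_space set \<Rightarrow> 'a \<Rightarrow> real \<Rightarrow> 'a set" where
  "intr_ball \<Omega> x \<epsilon> = {y \<in> closure \<Omega>. intrinsic_dist \<Omega> x y < ereal \<epsilon>}"

definition eps_laplacian :: "'a::euclidean_space set \<Rightarrow> real \<Rightarrow> ('a \<Rightarrow> real) \<Rightarrow> 'a \<Rightarrow> real" where
  "eps_laplacian \<Omega> \<epsilon> w x =
     (INF y \<in> intr_ball \<Omega> x \<epsilon>. w y) + (SUP y \<in> intr_ball \<Omega> x \<epsilon>. w y) - 2 * w x"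

end

theory Submission
  imports Defs
begin

definition Sm :: "(real \<Rightarrow> 'a::real_normed_vector) \<Rightarrow> nat \<Rightarrow> (nat \<Rightarrow> real) \<Rightarrow> real" where
  "Sm \<gamma> n p = (\<Sum>k<n. norm (\<gamma> (p (Suc k)) - \<gamma> (p k)))"

definition part :: "real \<Rightarrow> real \<Rightarrow> nat \<Rightarrow> (nat \<Rightarrow> real) \<Rightarrow> bool" where
  "part a b n p \<longleftrightarrow> p 0 = a \<and> p n = b \<and> (\<forall>k<n. p k \<le> p (Suc k))"

lemma Sm_nonneg: "0 \<le> Sm \<gamma> n p"
  unfolding Sm_def by (simp add: sum_nonneg)

lemma part_mono: "part a b n p \<Longrightarrow> i \<le> j \<Longrightarrow> j \<le> n \<Longrightarrow> p i \<le> p j"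
proof (induction j)
  case 0 then show ?case by simp
next
  case (Suc j)
  then show ?case unfolding part_def
    by (metis Suc_leD Suc_le_lessD le_Suc_eq order_trans order_refl)
qed

lemma part_range: "part a b n p \<Longrightarrow> i \<le> n \<Longrightarrow> a \<le> p i \<and> p i \<le> b"
  using part_mono[of a b n p 0 i] part_mono[of a b n p i n] unfolding part_def by auto

definition catp :: "nat \<Rightarrow> (nat \<Rightarrow> real) \<Rightarrow> (nat \<Rightarrow> real) \<Rightarrow> nat \<Rightarrow> real" where
  "catp n p q = (\<lambda>k. if k \<le> n then p k else q (k - n))"

lemma part_cat: "part a b n p \<Longrightarrow> part b c m q \<Longrightarrow> part a c (n+m) (catp n p q)"
  unfolding part_def catp_def
  apply (intro conjI)
    apply simp
   apply (cases m; simp)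
  apply (intro allI impI)
  subgoal for k
    apply (cases "Suc k \<le> n")
     apply simp
    apply (cases "k = n")
     apply simp
     apply (metis zero_less_iff_neq_zero add_0_right less_add_eq_less not_less_eq_eq)
    by (simp add: Suc_diff_le)
  done

lemma Sm_cat_aux: "part a b n p \<Longrightarrow> part b c m' q \<Longrightarrow>
   Sm \<gamma> (n+m) (catp n p q) = Sm \<gamma> n p + Sm \<gamma> m q"
proof (induction m)
  case 0
  then show ?case unfolding Sm_def catp_def by (simp only: add_0_right lessThan_0 sum.empty) (rule sum.cong, auto)
next
  case (Suc m)
  have "Sm \<gamma> (n + Suc m) (catp n p q) = Sm \<gamma> (n+m) (catp n p q)
      + norm (\<gamma> (catp n p q (Suc (n+m))) - \<gamma> (catp n p q (n+m)))"
    unfolding Sm_def by simp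
  also have "norm (\<gamma> (catp n p q (Suc (n+m))) - \<gamma> (catp n p q (n+m)))
     = norm (\<gamma> (q (Suc m)) - \<gamma> (q m))"
    using Suc.prems unfolding catp_def part_def
    by (cases m) (auto simp: Suc_diff_le)
  finally show ?case using Suc unfolding Sm_def by simp
qed

lemma Sm_cat: "part a b n p \<Longrightarrow> part b c m q \<Longrightarrow>
   Sm \<gamma> (n+m) (catp n p q) = Sm \<gamma> n p + Sm \<gamma> m q"
  by (rule Sm_cat_aux)


definition bdd01 :: "(real \<Rightarrow> 'a::real_normed_vector) \<Rightarrow> real \<Rightarrow> bool" where
  "bdd01 \<gamma> L \<longleftrightarrow> (\<forall>n p. part 0 1 n p \<longrightarrow> Sm \<gamma> n p \<le> L)"

definition Vr :: "(real \<Rightarrow> 'a::real_normed_vector) \<Rightarrow> real \<Rightarrow> real \<Rightarrow> real" where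
  "Vr \<gamma> a b = Sup {Sm \<gamma> n p |n p. part a b n p}"

lemma part_triv: "a \<le> b \<Longrightarrow> part a b 1 (\<lambda>k. if k = 0 then a else b)"
  unfolding part_def by auto

lemma part_le: "part a b n p \<Longrightarrow> a \<le> b"
  using part_range[of a b n p 0] unfolding part_def by auto

lemma Sm_le_L:
  assumes "bdd01 \<gamma> L" "0 \<le> a" "b \<le> 1" "part a b n p"
  shows "Sm \<gamma> n p \<le> L"
proof -
  have ab: "a \<le> b" using part_le assms(4) .
  define p0 where "p0 = (\<lambda>k::nat. if k = 0 then 0 else a)"
  define p1 where "p1 = (\<lambda>k::nat. if k = 0 then b else 1)"
  have P0: "part 0 a 1 p0" unfolding p0_def using part_triv assms(2) by blast
  have P1: "part b 1 1 p1" unfolding p1_def using part_triv assms(3) by blast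
  have Q: "part 0 b (1+n) (catp 1 p0 p)" using part_cat[OF P0 assms(4)] .
  have R: "part 0 1 (1+n+1) (catp (1+n) (catp 1 p0 p) p1)" using part_cat[OF Q P1] .
  have "Sm \<gamma> (1+n+1) (catp (1+n) (catp 1 p0 p) p1) = Sm \<gamma> 1 p0 + Sm \<gamma> n p + Sm \<gamma> 1 p1"
    using Sm_cat[OF Q P1, of \<gamma>] Sm_cat[OF P0 assms(4), of \<gamma>] by simp
  moreover have "Sm \<gamma> (1+n+1) (catp (1+n) (catp 1 p0 p) p1) \<le> L"
    using assms(1) R unfolding bdd01_def by blast
  ultimately show ?thesis using Sm_nonneg[of \<gamma> 1 p0] Sm_nonneg[of \<gamma> 1 p1] by linarith
qed

lemma bdd_part: "bdd01 \<gamma> L \<Longrightarrow> 0 \<le> a \<Longrightarrow> b \<le> 1 \<Longrightarrow> bdd_above {Sm \<gamma> n p |n p. part a b n p}"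
  unfolding bdd_above_def using Sm_le_L by blast

lemma Sm_le_Vr: "bdd01 \<gamma> L \<Longrightarrow> 0 \<le> a \<Longrightarrow> b \<le> 1 \<Longrightarrow> part a b n p \<Longrightarrow> Sm \<gamma> n p \<le> Vr \<gamma> a b"
  unfolding Vr_def by (rule cSup_upper) (auto intro: bdd_part)

lemma Vr_le: "a \<le> b \<Longrightarrow> (\<And>n p. part a b n p \<Longrightarrow> Sm \<gamma> n p \<le> c) \<Longrightarrow> Vr \<gamma> a b \<le> c"
  unfolding Vr_def apply (rule cSup_least) using part_triv[of a b] by blast+

lemma Vr_nonneg: "bdd01 \<gamma> L \<Longrightarrow> 0 \<le> a \<Longrightarrow> a \<le> b \<Longrightarrow> b \<le> 1 \<Longrightarrow> 0 \<le> Vr \<gamma> a b"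
  using Sm_le_Vr[OF _ _ _ part_triv, of \<gamma> L a b] Sm_nonneg[of \<gamma>] by (meson order_trans)

lemma Vr_refl: "Vr \<gamma> a a = 0"
proof -
  have "{Sm \<gamma> n p |n p. part a a n p} = {0}"
  proof (intro equalityI subsetI)
    fix x assume "x \<in> {Sm \<gamma> n p |n p. part a a n p}"
    then obtain n p where x: "x = Sm \<gamma> n p" and P: "part a a n p" by blast
    have "\<And>k. k \<le> n \<Longrightarrow> p k = a" using part_range[OF P] by fastforce
    then have "x = 0" unfolding x Sm_def by (intro sum.neutral) auto
    then show "x \<in> {0}" by simp
  next
    fix x assume "x \<in> {0::real}"
    then show "x \<in> {Sm \<gamma> n p |n p. part a a n p}"
      using part_triv[of a a] unfolding Sm_def by (intro CollectI exI[of _ 1]) auto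
  qed
  then show ?thesis unfolding Vr_def by simp
qed

lemma Vr_super:
  assumes "bdd01 \<gamma> L" "0 \<le> a" "a \<le> s" "s \<le> c" "c \<le> 1"
  shows "Vr \<gamma> a s + Vr \<gamma> s c \<le> Vr \<gamma> a c"
proof -
  have *: "Sm \<gamma> n p + Sm \<gamma> m q \<le> Vr \<gamma> a c" if "part a s n p" "part s c m q" for n p m q
    using Sm_cat[OF that, of \<gamma>] Sm_le_Vr[OF assms(1) assms(2) assms(5) part_cat[OF that]] by simp
  have "Vr \<gamma> a s \<le> Vr \<gamma> a c - Sm \<gamma> m q" if "part s c m q" for m q
    using * that assms by (intro Vr_le) (auto simp: algebra_simps)
  then have "Vr \<gamma> s c \<le> Vr \<gamma> a c - Vr \<gamma> a s"
    using assms by (intro Vr_le) (auto simp: algebra_simps)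
  then show ?thesis by simp
qed

lemma clip_ineq:
  fixes \<gamma> :: "real \<Rightarrow> 'a::real_normed_vector"
  assumes "x \<le> y"
  shows "norm (\<gamma> y - \<gamma> x) \<le> norm (\<gamma> (min y s) - \<gamma> (min x s)) + norm (\<gamma> (max y s) - \<gamma> (max x s))"
proof (cases "y \<le> s")
  case True then show ?thesis using assms by (simp add: min_def max_def)
next
  case False
  show ?thesis
  proof (cases "x \<le> s")
    case True
    have "norm (\<gamma> y - \<gamma> x) \<le> norm (\<gamma> s - \<gamma> x) + norm (\<gamma> y - \<gamma> s)"
      using norm_triangle_ineq[of "\<gamma> s - \<gamma> x" "\<gamma> y - \<gamma> s"] by simp
    then show ?thesis using True False by (simp add: min_def max_def)
  next
    case False2: False
    then show ?thesis using False assms by (simp add: min_def max_def)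
  qed
qed

lemma part_min: "part a c n p \<Longrightarrow> a \<le> s \<Longrightarrow> s \<le> c \<Longrightarrow> part a s n (\<lambda>k. min (p k) s)"
  unfolding part_def by (auto simp: min_def)

lemma part_max: "part a c n p \<Longrightarrow> a \<le> s \<Longrightarrow> s \<le> c \<Longrightarrow> part s c n (\<lambda>k. max (p k) s)"
  unfolding part_def by (auto simp: max_def)

lemma Sm_clip: "part a c n p \<Longrightarrow>
   Sm \<gamma> n p \<le> Sm \<gamma> n (\<lambda>k. min (p k) s) + Sm \<gamma> n (\<lambda>k. max (p k) s)"
  unfolding Sm_def sum.distrib[symmetric] part_def
  by (intro sum_mono clip_ineq) auto

lemma Vr_sub:
  assumes "bdd01 \<gamma> L" "0 \<le> a" "a \<le> s" "s \<le> c" "c \<le> 1"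
  shows "Vr \<gamma> a c \<le> Vr \<gamma> a s + Vr \<gamma> s c"
proof (rule Vr_le)
  show "a \<le> c" using assms by simp
  fix n p assume P: "part a c n p"
  have "Sm \<gamma> n (\<lambda>k. min (p k) s) \<le> Vr \<gamma> a s"
    using Sm_le_Vr[OF assms(1) assms(2) _ part_min[OF P assms(3,4)]] assms by simp
  moreover have "Sm \<gamma> n (\<lambda>k. max (p k) s) \<le> Vr \<gamma> s c"
    using Sm_le_Vr[OF assms(1) _ assms(5) part_max[OF P assms(3,4)]] assms by simp
  ultimately show "Sm \<gamma> n p \<le> Vr \<gamma> a s + Vr \<gamma> s c" using Sm_clip[OF P, of \<gamma> s] by linarith
qed


lemma Vr_right:
  fixes \<gamma> :: "real \<Rightarrow> 'a::real_normed_vector"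
  assumes B: "bdd01 \<gamma> L" and cont: "continuous_on {0..1} \<gamma>"
    and a: "0 \<le> a" "a < 1" and eta: "\<eta> > 0"
  shows "\<exists>\<delta>>0. \<forall>s. a \<le> s \<and> s < a + \<delta> \<longrightarrow> Vr \<gamma> a s \<le> \<eta>"
proof -
  define \<Lambda> where "\<Lambda> = Vr \<gamma> a 1"
  have "part a 1 1 (\<lambda>k. if k = 0 then a else 1)" using part_triv[of a 1] a by simp
  then have ne: "{Sm \<gamma> n p |n p. part a 1 n p} \<noteq> {}" by blast
  have "\<Lambda> - \<eta>/2 < Sup {Sm \<gamma> n p |n p. part a 1 n p}" using eta unfolding \<Lambda>_def Vr_def by simp
  from less_cSupE[OF this ne] obtain x where "x \<in> {Sm \<gamma> n p |n p. part a 1 n p}" "\<Lambda> - \<eta>/2 < x" .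
  then obtain n p where P: "part a 1 n p" and Sp: "\<Lambda> - \<eta>/2 < Sm \<gamma> n p"
    by blast
  define T where "T = (\<lambda>i. p i - a) ` {i. i \<le> n \<and> a < p i}"
  have finT: "finite T" unfolding T_def by simp
  have neT: "T \<noteq> {}" using P a unfolding T_def part_def by auto
  have Tpos: "\<forall>t\<in>T. 0 < t" unfolding T_def by auto
  define \<delta>1 where "\<delta>1 = Min T"
  have d1: "\<delta>1 > 0" unfolding \<delta>1_def using finT neT Tpos by simp
  have pcase: "p i = a \<or> a + \<delta>1 \<le> p i" if "i \<le> n" for i
  proof (cases "a < p i")
    case True
    then have "p i - a \<in> T" unfolding T_def using that by blast
    then have "\<delta>1 \<le> p i - a" unfolding \<delta>1_def using finT by simp
    then show ?thesis by simp
  next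
    case False then show ?thesis using part_range[OF P that] by simp
  qed
  have "a \<in> {0..1}" using a by simp
  have "\<exists>d>0. \<forall>x'\<in>{0..1}. dist x' a < d \<longrightarrow> dist (\<gamma> x') (\<gamma> a) < \<eta>/2"
    using cont[unfolded continuous_on_iff, rule_format, OF \<open>a \<in> {0..1}\<close> half_gt_zero[OF eta]] .
  then obtain \<delta>2 where d2: "\<delta>2 > 0"
    and d2P: "\<And>x'. x' \<in> {0..1} \<Longrightarrow> dist x' a < \<delta>2 \<Longrightarrow> dist (\<gamma> x') (\<gamma> a) < \<eta>/2"
    by blast
  define \<delta> where "\<delta> = min \<delta>1 (min \<delta>2 (1 - a))"
  have dpos: "\<delta> > 0" unfolding \<delta>_def using d1 d2 a by simp
  have main: "Vr \<gamma> a s \<le> \<eta>" if s: "a \<le> s" "s < a + \<delta>" for s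
  proof -
    have s1: "s \<le> 1" "s < a + \<delta>1" "dist s a < \<delta>2" using s unfolding \<delta>_def dist_real_def by auto
    have g: "norm (\<gamma> s - \<gamma> a) < \<eta>/2" using d2P[of s] s1 s a by (simp add: dist_norm)
    define pmin where "pmin = (\<lambda>k. min (p k) s)"
    define pmax where "pmax = (\<lambda>k. max (p k) s)"
    have Pmax: "part s 1 n pmax" unfolding pmax_def using part_max[OF P s(1) s1(1)] .
    have clip: "Sm \<gamma> n p \<le> Sm \<gamma> n pmin + Sm \<gamma> n pmax"
      unfolding pmin_def pmax_def by (rule Sm_clip[OF P])
    define e where "e = (\<lambda>k. if a < p k then 1 else (0::real))"
    have trm: "norm (\<gamma> (pmin (Suc k)) - \<gamma> (pmin k)) \<le> norm (\<gamma> s - \<gamma> a) * (e (Suc k) - e k)"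
      if k: "k < n" for k
    proof -
      have mono: "p k \<le> p (Suc k)" using P k unfolding part_def by blast
      have c1: "p k = a \<or> a + \<delta>1 \<le> p k" using pcase k by simp
      have c2: "p (Suc k) = a \<or> a + \<delta>1 \<le> p (Suc k)" using pcase k by simp
      have sd: "s < a + \<delta>1" using s1 by simp
      consider "p (Suc k) = a" "p k = a" | "a + \<delta>1 \<le> p (Suc k)" "p k = a"
        | "a + \<delta>1 \<le> p (Suc k)" "a + \<delta>1 \<le> p k"
        using c1 c2 mono d1 by linarith
      then show ?thesis
      proof cases
        case 1
        then have "pmin (Suc k) = a" "pmin k = a" "e (Suc k) = 0" "e k = 0"
          unfolding pmin_def e_def using s by auto
        then show ?thesis by simp
      next
        case 2
        then have "pmin (Suc k) = s" "pmin k = a" "e (Suc k) = 1" "e k = 0"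
          unfolding pmin_def e_def using s sd d1 by auto
        then show ?thesis by simp
      next
        case 3
        then have "pmin (Suc k) = s" "pmin k = s" "e (Suc k) = 1" "e k = 1"
          unfolding pmin_def e_def using s sd d1 by auto
        then show ?thesis by simp
      qed
    qed
    have "Sm \<gamma> n pmin \<le> (\<Sum>k<n. norm (\<gamma> s - \<gamma> a) * (e (Suc k) - e k))"
      unfolding Sm_def by (intro sum_mono trm) simp
    also have "\<dots> = norm (\<gamma> s - \<gamma> a) * (e n - e 0)"
      by (simp add: sum_distrib_left[symmetric] sum_lessThan_telescope)
    also have "\<dots> = norm (\<gamma> s - \<gamma> a)" using P a unfolding e_def part_def by simp
    finally have pminle: "Sm \<gamma> n pmin \<le> norm (\<gamma> s - \<gamma> a)" .
    show ?thesis
    proof (rule Vr_le)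
      show "a \<le> s" by fact
      fix m q assume Q: "part a s m q"
      have "Sm \<gamma> m q + Sm \<gamma> n pmax \<le> \<Lambda>"
        using Sm_cat[OF Q Pmax, of \<gamma>] Sm_le_Vr[OF B a(1) _ part_cat[OF Q Pmax]] unfolding \<Lambda>_def
        by simp
      then show "Sm \<gamma> m q \<le> \<eta>" using clip pminle g Sp by linarith
    qed
  qed
  show ?thesis using dpos main by blast
qed

lemma Vr_left:
  fixes \<gamma> :: "real \<Rightarrow> 'a::real_normed_vector"
  assumes B: "bdd01 \<gamma> L" and cont: "continuous_on {0..1} \<gamma>"
    and c: "0 < c" "c \<le> 1" and eta: "\<eta> > 0"
  shows "\<exists>\<delta>>0. \<forall>s. c - \<delta> < s \<and> s \<le> c \<longrightarrow> Vr \<gamma> s c \<le> \<eta>"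
proof -
  define \<Lambda> where "\<Lambda> = Vr \<gamma> 0 c"
  have "part 0 c 1 (\<lambda>k. if k = 0 then 0 else c)" using part_triv[of 0 c] c by simp
  then have ne: "{Sm \<gamma> n p |n p. part 0 c n p} \<noteq> {}" by blast
  have "\<Lambda> - \<eta>/2 < Sup {Sm \<gamma> n p |n p. part 0 c n p}" using eta unfolding \<Lambda>_def Vr_def by simp
  from less_cSupE[OF this ne] obtain x where "x \<in> {Sm \<gamma> n p |n p. part 0 c n p}" "\<Lambda> - \<eta>/2 < x" .
  then obtain n p where P: "part 0 c n p" and Sp: "\<Lambda> - \<eta>/2 < Sm \<gamma> n p"
    by blast
  define T where "T = (\<lambda>i. c - p i) ` {i. i \<le> n \<and> p i < c}"
  have finT: "finite T" unfolding T_def by simp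
  have neT: "T \<noteq> {}" using P c unfolding T_def part_def by auto
  have Tpos: "\<forall>t\<in>T. 0 < t" unfolding T_def by auto
  define \<delta>1 where "\<delta>1 = Min T"
  have d1: "\<delta>1 > 0" unfolding \<delta>1_def using finT neT Tpos by simp
  have pcase: "p i = c \<or> p i \<le> c - \<delta>1" if "i \<le> n" for i
  proof (cases "p i < c")
    case True
    then have "c - p i \<in> T" unfolding T_def using that by blast
    then have "\<delta>1 \<le> c - p i" unfolding \<delta>1_def using finT by simp
    then show ?thesis by simp
  next
    case False then show ?thesis using part_range[OF P that] by simp
  qed
  have "c \<in> {0..1}" using c by simp
  have "\<exists>d>0. \<forall>x'\<in>{0..1}. dist x' c < d \<longrightarrow> dist (\<gamma> x') (\<gamma> c) < \<eta>/2"
    using cont[unfolded continuous_on_iff, rule_format, OF \<open>c \<in> {0..1}\<close> half_gt_zero[OF eta]] .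
  then obtain \<delta>2 where d2: "\<delta>2 > 0"
    and d2P: "\<And>x'. x' \<in> {0..1} \<Longrightarrow> dist x' c < \<delta>2 \<Longrightarrow> dist (\<gamma> x') (\<gamma> c) < \<eta>/2"
    by blast
  define \<delta> where "\<delta> = min \<delta>1 (min \<delta>2 c)"
  have dpos: "\<delta> > 0" unfolding \<delta>_def using d1 d2 c by simp
  have main: "Vr \<gamma> s c \<le> \<eta>" if s: "c - \<delta> < s" "s \<le> c" for s
  proof -
    have s1: "0 \<le> s" "c - \<delta>1 < s" "dist s c < \<delta>2" using s unfolding \<delta>_def dist_real_def by auto
    have g: "norm (\<gamma> c - \<gamma> s) < \<eta>/2" using d2P[of s] s1 s c by (simp add: dist_norm norm_minus_commute)
    define pmin where "pmin = (\<lambda>k. min (p k) s)"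
    define pmax where "pmax = (\<lambda>k. max (p k) s)"
    have Pmin: "part 0 s n pmin" unfolding pmin_def using part_min[OF P s1(1) s(2)] .
    have clip: "Sm \<gamma> n p \<le> Sm \<gamma> n pmin + Sm \<gamma> n pmax"
      unfolding pmin_def pmax_def by (rule Sm_clip[OF P])
    define e where "e = (\<lambda>k. if p k < c then 0 else (1::real))"
    have trm: "norm (\<gamma> (pmax (Suc k)) - \<gamma> (pmax k)) \<le> norm (\<gamma> c - \<gamma> s) * (e (Suc k) - e k)"
      if k: "k < n" for k
    proof -
      have mono: "p k \<le> p (Suc k)" using P k unfolding part_def by blast
      have c1: "p k = c \<or> p k \<le> c - \<delta>1" using pcase k by simp
      have c2: "p (Suc k) = c \<or> p (Suc k) \<le> c - \<delta>1" using pcase k by simp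
      have sd: "c - \<delta>1 < s" using s1 by simp
      consider "p (Suc k) = c" "p k = c" | "p (Suc k) = c" "p k \<le> c - \<delta>1"
        | "p (Suc k) \<le> c - \<delta>1" "p k \<le> c - \<delta>1"
        using c1 c2 mono d1 by linarith
      then show ?thesis
      proof cases
        case 1
        then have "pmax (Suc k) = c" "pmax k = c" "e (Suc k) = 1" "e k = 1"
          unfolding pmax_def e_def using s by auto
        then show ?thesis by simp
      next
        case 2
        then have "pmax (Suc k) = c" "pmax k = s" "e (Suc k) = 1" "e k = 0"
          unfolding pmax_def e_def using s sd d1 by auto
        then show ?thesis by simp
      next
        case 3
        then have "pmax (Suc k) = s" "pmax k = s" "e (Suc k) = 0" "e k = 0"
          unfolding pmax_def e_def using s sd d1 by auto
        then show ?thesis by simp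
      qed
    qed
    have "Sm \<gamma> n pmax \<le> (\<Sum>k<n. norm (\<gamma> c - \<gamma> s) * (e (Suc k) - e k))"
      unfolding Sm_def by (intro sum_mono trm) simp
    also have "\<dots> = norm (\<gamma> c - \<gamma> s) * (e n - e 0)"
      by (simp add: sum_distrib_left[symmetric] sum_lessThan_telescope)
    also have "\<dots> = norm (\<gamma> c - \<gamma> s)" using P c unfolding e_def part_def by simp
    finally have pmaxle: "Sm \<gamma> n pmax \<le> norm (\<gamma> c - \<gamma> s)" .
    show ?thesis
    proof (rule Vr_le)
      show "s \<le> c" by fact
      fix m q assume Q: "part s c m q"
      have "Sm \<gamma> n pmin + Sm \<gamma> m q \<le> \<Lambda>"
        using Sm_cat[OF Pmin Q, of \<gamma>] Sm_le_Vr[OF B _ c(2) part_cat[OF Pmin Q]] unfolding \<Lambda>_def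
        by simp
      then show "Sm \<gamma> m q \<le> \<eta>" using clip pmaxle g Sp by linarith
    qed
  qed
  show ?thesis using dpos main by blast
qed


lemma lam_cont:
  fixes \<gamma> :: "real \<Rightarrow> 'a::real_normed_vector"
  assumes B: "bdd01 \<gamma> L" and cont: "continuous_on {0..1} \<gamma>"
  shows "continuous_on {0..1} (\<lambda>s. Vr \<gamma> 0 s)"
  unfolding continuous_on_iff
proof (intro ballI allI impI)
  fix x e :: real assume x: "x \<in> {0..1}" and e: "0 < e"
  have e2: "e/2 > 0" using e by simp
  have "\<exists>d>0. \<forall>s. x \<le> s \<and> s < x + d \<and> s \<le> 1 \<longrightarrow> Vr \<gamma> x s \<le> e/2"
  proof (cases "x < 1")
    case True
    then obtain d where "d > 0" "\<forall>s. x \<le> s \<and> s < x + d \<longrightarrow> Vr \<gamma> x s \<le> e/2"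
      using Vr_right[OF B cont _ True e2] x by auto
    then show ?thesis by blast
  next
    case False
    then have "\<forall>s. x \<le> s \<and> s < x + 1 \<and> s \<le> 1 \<longrightarrow> Vr \<gamma> x s \<le> e/2"
      using x e by (auto simp: Vr_refl)
    then show ?thesis by (intro exI[of _ 1]) simp
  qed
  then obtain dR where dR: "dR > 0" "\<And>s. x \<le> s \<Longrightarrow> s < x + dR \<Longrightarrow> s \<le> 1 \<Longrightarrow> Vr \<gamma> x s \<le> e/2"
    by blast
  have "\<exists>d>0. \<forall>s. x - d < s \<and> s \<le> x \<and> 0 \<le> s \<longrightarrow> Vr \<gamma> s x \<le> e/2"
  proof (cases "0 < x")
    case True
    then obtain d where "d > 0" "\<forall>s. x - d < s \<and> s \<le> x \<longrightarrow> Vr \<gamma> s x \<le> e/2"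
      using Vr_left[OF B cont True _ e2] x by auto
    then show ?thesis by blast
  next
    case False
    then have "\<forall>s. x - 1 < s \<and> s \<le> x \<and> 0 \<le> s \<longrightarrow> Vr \<gamma> s x \<le> e/2"
      using x e by (auto simp: Vr_refl)
    then show ?thesis by (intro exI[of _ 1]) simp
  qed
  then obtain dL where dL: "dL > 0" "\<And>s. x - dL < s \<Longrightarrow> s \<le> x \<Longrightarrow> 0 \<le> s \<Longrightarrow> Vr \<gamma> s x \<le> e/2"
    by blast
  show "\<exists>d>0. \<forall>x'\<in>{0..1}. dist x' x < d \<longrightarrow> dist (Vr \<gamma> 0 x') (Vr \<gamma> 0 x) < e"
  proof (intro exI[of _ "min dR dL"] conjI ballI impI)
    show "0 < min dR dL" using dR dL by simp
    fix x' assume x': "x' \<in> {0..1}" and d: "dist x' x < min dR dL"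
    show "dist (Vr \<gamma> 0 x') (Vr \<gamma> 0 x) < e"
    proof (cases "x \<le> x'")
      case True
      have "Vr \<gamma> x x' \<le> e/2" using dR(2)[OF True] d x' by (auto simp: dist_real_def)
      moreover have "Vr \<gamma> 0 x' \<le> Vr \<gamma> 0 x + Vr \<gamma> x x'" using Vr_sub[OF B _ _ True] x x' by auto
      moreover have "Vr \<gamma> 0 x + Vr \<gamma> x x' \<le> Vr \<gamma> 0 x'" using Vr_super[OF B _ _ True] x x' by auto
      moreover have "0 \<le> Vr \<gamma> x x'" using Vr_nonneg[OF B _ True] x x' by auto
      ultimately show ?thesis using e by (simp add: dist_real_def abs_if)
    next
      case False
      then have F: "x' \<le> x" by simp
      have "Vr \<gamma> x' x \<le> e/2" using dL(2)[OF _ F] d x' by (auto simp: dist_real_def)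
      moreover have "Vr \<gamma> 0 x \<le> Vr \<gamma> 0 x' + Vr \<gamma> x' x" using Vr_sub[OF B _ _ F] x x' by auto
      moreover have "Vr \<gamma> 0 x' + Vr \<gamma> x' x \<le> Vr \<gamma> 0 x" using Vr_super[OF B _ _ F] x x' by auto
      moreover have "0 \<le> Vr \<gamma> x' x" using Vr_nonneg[OF B _ F] x x' by auto
      ultimately show ?thesis using e by (simp add: dist_real_def abs_if)
    qed
  qed
qed


lemma Sm_le_path_length: "part 0 1 n p \<Longrightarrow> ereal (Sm \<gamma> n p) \<le> path_length \<gamma>"
  unfolding path_length_def Sm_def part_def
  by (rule SUP_upper2[of "(n,p)"]) auto

lemma path_length_le: "(\<And>n p. part 0 1 n p \<Longrightarrow> Sm \<gamma> n p \<le> c) \<Longrightarrow> path_length \<gamma> \<le> ereal c"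
  unfolding path_length_def
  by (rule SUP_least) (auto simp: part_def Sm_def)

lemma bdd01_path_length: "path_length \<gamma> < ereal L \<Longrightarrow> bdd01 \<gamma> L"
  unfolding bdd01_def using Sm_le_path_length
  by (metis ereal_less_eq(3) less_imp_le order_le_less_trans)

lemma path_length_subpath:
  assumes B: "bdd01 \<gamma> L" and st: "0 \<le> s" "s \<le> t" "t \<le> 1"
  shows "path_length (subpath s t \<gamma>) \<le> ereal (Vr \<gamma> s t)"
proof (rule path_length_le)
  fix n p assume P: "part 0 1 n p"
  have P': "part s t n (\<lambda>i. (t - s) * p i + s)"
    using P st unfolding part_def by (auto intro: mult_left_mono)
  have "Sm (subpath s t \<gamma>) n p = Sm \<gamma> n (\<lambda>i. (t - s) * p i + s)"
    unfolding Sm_def subpath_def by simp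
  also have "\<dots> \<le> Vr \<gamma> s t" using Sm_le_Vr[OF B st(1) st(3) P'] .
  finally show "Sm (subpath s t \<gamma>) n p \<le> Vr \<gamma> s t" .
qed

lemma path_length_reverse: "path_length (reversepath \<gamma>) \<le> path_length \<gamma>"
  unfolding path_length_def[of "reversepath \<gamma>"]
proof (rule SUP_least)
  fix P :: "nat \<times> (nat \<Rightarrow> real)" assume "P \<in> {(n, t). t 0 = 0 \<and> t n = 1 \<and> (\<forall>k<n. t k \<le> t (Suc k))}"
  then obtain n p where Pe: "P = (n,p)" and P: "part 0 1 n p" unfolding part_def by auto
  define q where "q = (\<lambda>i. 1 - p (n - i))"
  have Q: "part 0 1 n q" using P unfolding part_def q_def
  proof (auto)
    fix k assume "\<forall>k<n. p k \<le> p (Suc k)" "k < n"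
    then have "p (n - Suc k) \<le> p (Suc (n - Suc k))" by simp
    then show "p (n - Suc k) \<le> p (n - k)" using \<open>k < n\<close> by (simp add: Suc_diff_Suc)
  qed
  have "(\<Sum>k<n. norm (reversepath \<gamma> (p (Suc k)) - reversepath \<gamma> (p k)))
      = (\<Sum>k<n. norm (\<gamma> (q (Suc (n - Suc k))) - \<gamma> (q (n - Suc k))))"
    unfolding reversepath_def q_def
    by (intro sum.cong refl) (simp add: Suc_diff_Suc norm_minus_commute)
  also have "\<dots> = Sm \<gamma> n q"
    unfolding Sm_def by (rule sum.nat_diff_reindex[where g = "\<lambda>j. norm (\<gamma> (q (Suc j)) - \<gamma> (q j))"])
  finally show "ereal (\<Sum>k<fst P. norm (reversepath \<gamma> (snd P (Suc k)) - reversepath \<gamma> (snd P k)))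
      \<le> path_length \<gamma>"
    using Sm_le_path_length[OF Q, of \<gamma>] Pe by simp
qed

lemma D_sym: "intrinsic_dist \<Omega> a b \<le> intrinsic_dist \<Omega> b a"
  unfolding intrinsic_dist_def
proof (rule INF_greatest)
  fix \<gamma> assume "\<gamma> \<in> {\<gamma>. path \<gamma> \<and> path_image \<gamma> \<subseteq> closure \<Omega> \<and> pathstart \<gamma> = b \<and> pathfinish \<gamma> = a}"
  then have "reversepath \<gamma> \<in> {\<gamma>. path \<gamma> \<and> path_image \<gamma> \<subseteq> closure \<Omega> \<and> pathstart \<gamma> = a \<and> pathfinish \<gamma> = b}"
    by auto
  then show "(INF \<gamma>\<in>{\<gamma>. path \<gamma> \<and> path_image \<gamma> \<subseteq> closure \<Omega> \<and> pathstart \<gamma> = a \<and> pathfinish \<gamma> = b}. path_length \<gamma>)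
     \<le> path_length \<gamma>"
    by (rule INF_lower2) (rule path_length_reverse)
qed

lemma D_sub:
  assumes "path \<gamma>" "path_image \<gamma> \<subseteq> closure \<Omega>" "bdd01 \<gamma> L" "0 \<le> s" "s \<le> t" "t \<le> 1"
  shows "intrinsic_dist \<Omega> (\<gamma> s) (\<gamma> t) \<le> ereal (Vr \<gamma> s t)"
proof -
  have "subpath s t \<gamma> \<in> {\<gamma>'. path \<gamma>' \<and> path_image \<gamma>' \<subseteq> closure \<Omega> \<and> pathstart \<gamma>' = \<gamma> s \<and> pathfinish \<gamma>' = \<gamma> t}"
    using assms path_image_subpath_subset[of s t \<gamma>] by (auto intro: path_subpath)
  then have "intrinsic_dist \<Omega> (\<gamma> s) (\<gamma> t) \<le> path_length (subpath s t \<gamma>)"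
    unfolding intrinsic_dist_def by (rule INF_lower)
  also have "\<dots> \<le> ereal (Vr \<gamma> s t)" using path_length_subpath assms by blast
  finally show ?thesis .
qed


definition chain :: "'a::euclidean_space set \<Rightarrow> real \<Rightarrow> 'a \<Rightarrow> nat \<Rightarrow> bool" where
  "chain \<Omega> \<epsilon> x k \<longleftrightarrow> (\<exists>y. y 0 = x \<and> y k \<in> frontier \<Omega> \<and> (\<forall>j\<le>k. y j \<in> closure \<Omega>)
      \<and> (\<forall>j<k. intrinsic_dist \<Omega> (y j) (y (Suc j)) < ereal \<epsilon>))"

lemma chain_prepend:
  assumes "x \<in> closure \<Omega>" "intrinsic_dist \<Omega> x z < ereal \<epsilon>" "chain \<Omega> \<epsilon> z k"
  shows "chain \<Omega> \<epsilon> x (Suc k)"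
proof -
  obtain y where y: "y 0 = z" "y k \<in> frontier \<Omega>" "\<forall>j\<le>k. y j \<in> closure \<Omega>"
    "\<forall>j<k. intrinsic_dist \<Omega> (y j) (y (Suc j)) < ereal \<epsilon>"
    using assms(3) unfolding chain_def by blast
  define y' where "y' = (\<lambda>j. if j = 0 then x else y (j - 1))"
  have "y' 0 = x" "y' (Suc k) \<in> frontier \<Omega>" unfolding y'_def using y by auto
  moreover have "\<forall>j\<le>Suc k. y' j \<in> closure \<Omega>"
    unfolding y'_def using y assms(1) by (auto simp: le_diff_conv)
  moreover have "\<forall>j<Suc k. intrinsic_dist \<Omega> (y' j) (y' (Suc j)) < ereal \<epsilon>"
  proof (intro allI impI)
    fix j assume "j < Suc k"
    then show "intrinsic_dist \<Omega> (y' j) (y' (Suc j)) < ereal \<epsilon>"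
      unfolding y'_def using y assms(2) by (cases j) auto
  qed
  ultimately show ?thesis unfolding chain_def by blast
qed

lemma chain_frontier: "x \<in> frontier \<Omega> \<Longrightarrow> chain \<Omega> \<epsilon> x 0"
  unfolding chain_def frontier_def by (intro exI[of _ "\<lambda>_. x"]) auto

lemma chain_tail:
  assumes "chain \<Omega> \<epsilon> x (Suc k)"
  shows "\<exists>z. z \<in> closure \<Omega> \<and> intrinsic_dist \<Omega> x z < ereal \<epsilon> \<and> chain \<Omega> \<epsilon> z k"
proof -
  obtain y where y: "y 0 = x" "y (Suc k) \<in> frontier \<Omega>" "\<forall>j\<le>Suc k. y j \<in> closure \<Omega>"
    "\<forall>j<Suc k. intrinsic_dist \<Omega> (y j) (y (Suc j)) < ereal \<epsilon>"
    using assms unfolding chain_def by blast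
  have "chain \<Omega> \<epsilon> (y 1) k" unfolding chain_def
    using y by (intro exI[of _ "\<lambda>j. y (Suc j)"]) auto
  moreover have "y 1 \<in> closure \<Omega>" "intrinsic_dist \<Omega> x (y 1) < ereal \<epsilon>" using y by auto
  ultimately show ?thesis by blast
qed

lemma chain_path:
  fixes \<gamma> :: "real \<Rightarrow> 'a::euclidean_space"
  assumes pa: "path \<gamma>" and im: "path_image \<gamma> \<subseteq> closure \<Omega>" and fr: "\<gamma> 0 \<in> frontier \<Omega>"
    and B: "bdd01 \<gamma> L" and e: "\<epsilon> > 0"
  shows "t \<in> {0..1} \<Longrightarrow> Vr \<gamma> 0 t \<le> real m * \<epsilon> / 2 \<Longrightarrow> \<exists>k\<le>m+1. chain \<Omega> \<epsilon> (\<gamma> t) k"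
proof (induction m arbitrary: t)
  have cont: "continuous_on {0..1} \<gamma>" using pa unfolding path_def .
  have inC: "\<gamma> t \<in> closure \<Omega>" if "t \<in> {0..1}" for t using im that unfolding path_image_def by auto
  have small: "\<exists>k\<le>m+1. chain \<Omega> \<epsilon> (\<gamma> t) k" if t: "t \<in> {0..1}" "Vr \<gamma> 0 t < \<epsilon>" for t m
  proof -
    have "intrinsic_dist \<Omega> (\<gamma> t) (\<gamma> 0) \<le> intrinsic_dist \<Omega> (\<gamma> 0) (\<gamma> t)" by (rule D_sym)
    also have "\<dots> \<le> ereal (Vr \<gamma> 0 t)" using D_sub[OF pa im B] t by auto
    also have "\<dots> < ereal \<epsilon>" using t by simp
    finally have "chain \<Omega> \<epsilon> (\<gamma> t) (Suc 0)"
      using chain_prepend[OF inC[OF t(1)] _ chain_frontier[OF fr]] by blast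
    then show ?thesis by (intro exI[of _ "Suc 0"]) auto
  qed
  {
    case 0
    then show ?case using small[of t 0] e by simp
  next
    case (Suc m)
    show ?case
    proof (cases "Vr \<gamma> 0 t < \<epsilon>")
      case True then show ?thesis using small Suc.prems by blast
    next
      case False
      have t: "0 \<le> t" "t \<le> 1" using Suc.prems by auto
      have lc: "continuous_on {0..t} (\<lambda>s. Vr \<gamma> 0 s)"
        using lam_cont[OF B cont] by (rule continuous_on_subset) (use t in auto)
      have "\<exists>s. 0 \<le> s \<and> s \<le> t \<and> Vr \<gamma> 0 s = Vr \<gamma> 0 t - \<epsilon>/2"
        using False e Vr_refl[of \<gamma> 0] by (intro IVT'[OF _ _ t(1) lc]) auto
      then obtain s where s: "0 \<le> s" "s \<le> t" "Vr \<gamma> 0 s = Vr \<gamma> 0 t - \<epsilon>/2" by blast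
      have "Vr \<gamma> 0 s \<le> real m * \<epsilon> / 2" using s(3) Suc.prems(2) by (simp add: algebra_simps)
      then obtain k where k: "k \<le> m+1" "chain \<Omega> \<epsilon> (\<gamma> s) k" using Suc.IH[of s] s t by auto
      have "Vr \<gamma> 0 s + Vr \<gamma> s t \<le> Vr \<gamma> 0 t" using Vr_super[OF B _ s(1,2) t(2)] by simp
      then have "Vr \<gamma> s t \<le> \<epsilon>/2" using s(3) by simp
      have "intrinsic_dist \<Omega> (\<gamma> t) (\<gamma> s) \<le> intrinsic_dist \<Omega> (\<gamma> s) (\<gamma> t)" by (rule D_sym)
      also have "\<dots> \<le> ereal (Vr \<gamma> s t)" using D_sub[OF pa im B s(1,2) t(2)] .
      also have "\<dots> < ereal \<epsilon>" using \<open>Vr \<gamma> s t \<le> \<epsilon>/2\<close> e by simp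
      finally have "chain \<Omega> \<epsilon> (\<gamma> t) (Suc k)"
        using chain_prepend[OF inC _ k(2)] t by auto
      then show ?thesis using k(1) by (intro exI[of _ "Suc k"]) auto
    qed
  }
qed

lemma chain_exists:
  fixes \<Omega> :: "'a::euclidean_space set"
  assumes op: "open \<Omega>" and w: "width \<Omega> \<le> ereal W" and W: "0 \<le> W" and e: "\<epsilon> > 0"
    and x: "x \<in> closure \<Omega>"
  shows "\<exists>k\<le>nat \<lceil>2 * (W + 1) / \<epsilon>\<rceil> + 1. chain \<Omega> \<epsilon> x k"
proof (cases "x \<in> frontier \<Omega>")
  case True then show ?thesis using chain_frontier by blast
next
  case False
  then have xO: "x \<in> \<Omega>" using x closure_Un_frontier[of \<Omega>] by auto
  have "(INF y\<in>frontier \<Omega>. intrinsic_dist \<Omega> y x) \<le> width \<Omega>"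
    unfolding width_def using xO by (rule SUP_upper)
  also have "\<dots> < ereal (W + 1)" using w by (simp add: le_less_trans)
  finally obtain z where z: "z \<in> frontier \<Omega>" "intrinsic_dist \<Omega> z x < ereal (W + 1)"
    by (auto simp: INF_less_iff)
  then obtain \<gamma> where g: "path \<gamma>" "path_image \<gamma> \<subseteq> closure \<Omega>" "pathstart \<gamma> = z" "pathfinish \<gamma> = x"
    "path_length \<gamma> < ereal (W + 1)"
    unfolding intrinsic_dist_def by (auto simp: INF_less_iff)
  have B: "bdd01 \<gamma> (W + 1)" using bdd01_path_length[OF g(5)] .
  have "Vr \<gamma> 0 1 \<le> W + 1" using B unfolding bdd01_def by (intro Vr_le) auto
  also have "W + 1 \<le> real (nat \<lceil>2 * (W + 1) / \<epsilon>\<rceil>) * \<epsilon> / 2"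
  proof -
    have "2 * (W + 1) / \<epsilon> \<le> real (nat \<lceil>2 * (W + 1) / \<epsilon>\<rceil>)" by linarith
    then have "2 * (W + 1) / \<epsilon> * \<epsilon> \<le> real (nat \<lceil>2 * (W + 1) / \<epsilon>\<rceil>) * \<epsilon>"
      using e by (intro mult_right_mono) auto
    then show ?thesis using e by simp
  qed
  finally have "\<exists>k\<le>nat \<lceil>2 * (W + 1) / \<epsilon>\<rceil> + 1. chain \<Omega> \<epsilon> (\<gamma> 1) k"
    using chain_path[OF g(1,2) _ B e] g(3) z(1) unfolding pathstart_def by auto
  then show ?thesis using g(4) unfolding pathfinish_def by simp
qed


lemma comparison:
  fixes \<Omega> :: "'a::euclidean_space set" and u :: "'a \<Rightarrow> real"
  assumes op: "open \<Omega>" and e: "\<epsilon> > 0"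
    and KK: "\<And>x. x \<in> closure \<Omega> \<Longrightarrow> \<exists>k\<le>K. chain \<Omega> \<epsilon> x k"
    and ub: "\<And>x. x \<in> closure \<Omega> \<Longrightarrow> \<bar>u x\<bar> \<le> M"
    and lap: "\<And>x. x \<in> \<Omega> \<Longrightarrow> -(\<epsilon>\<^sup>2 * F) \<le> eps_laplacian \<Omega> \<epsilon> u x"
    and F: "0 \<le> F"
    and bd: "\<And>x. x \<in> frontier \<Omega> \<Longrightarrow> u x \<le> G"
  shows "\<And>x. x \<in> closure \<Omega> \<Longrightarrow> u x \<le> G + \<epsilon>\<^sup>2 * (F + 1) * (real K + 1)\<^sup>2"
proof -
  define N where "N x = (LEAST k. chain \<Omega> \<epsilon> x k)" for x
  have NP: "chain \<Omega> \<epsilon> x (N x) \<and> N x \<le> K" if xc: "x \<in> closure \<Omega>" for x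
  proof -
    obtain k where k: "k \<le> K" "chain \<Omega> \<epsilon> x k" using KK[OF xc] by blast
    have "chain \<Omega> \<epsilon> x (N x)" unfolding N_def by (rule LeastI[of _ k]) (rule k(2))
    moreover have "N x \<le> k" unfolding N_def by (rule Least_le) (rule k(2))
    ultimately show ?thesis using k(1) by simp
  qed
  have Nle: "N x \<le> k" if "chain \<Omega> \<epsilon> x k" for x k
    unfolding N_def by (rule Least_le) (rule that)
  define Bc where "Bc = \<epsilon>\<^sup>2 * (F + 1)"
  have Bc: "Bc > 0" unfolding Bc_def using e F by simp
  define \<phi> where "\<phi> k = Bc * (2 * (real K + 1) * real k - (real k)\<^sup>2)" for k :: nat
  have \<phi>mono: "\<phi> i \<le> \<phi> j" if "i \<le> j" "j \<le> K + 1" for i j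
  proof -
    have ij: "real i \<le> real j" "real i + real j \<le> 2 * (real K + 1)" using that by auto
    have "(2 * (real K + 1) * real j - (real j)\<^sup>2) - (2 * (real K + 1) * real i - (real i)\<^sup>2)
        = (real j - real i) * (2 * (real K + 1) - real i - real j)"
      by (simp add: algebra_simps power2_eq_square)
    also have "\<dots> \<ge> 0" using ij by (intro mult_nonneg_nonneg) auto
    finally have "0 \<le> (2 * (real K + 1) * real j - (real j)\<^sup>2) - (2 * (real K + 1) * real i - (real i)\<^sup>2)" .
    then show ?thesis unfolding \<phi>_def using Bc by (simp add: mult_left_mono)
  qed
  have \<phi>0: "\<phi> 0 = 0" unfolding \<phi>_def by simp
  have \<phi>nn: "0 \<le> \<phi> k" if "k \<le> K + 1" for k using \<phi>mono[of 0 k] that \<phi>0 by simp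
  have \<phi>K: "\<phi> (K + 1) = Bc * (real K + 1)\<^sup>2" unfolding \<phi>_def by (simp only: of_nat_add of_nat_1) (simp add: power2_eq_square algebra_simps)
  have \<phi>2: "\<phi> k' + \<phi> (Suc (Suc k')) = 2 * \<phi> (Suc k') - 2 * Bc" for k'
    unfolding \<phi>_def by (simp add: power2_eq_square algebra_simps)
  define v where "v x = \<phi> (N x)" for x
  define w where "w x = u x - v x" for x
  have vnn: "0 \<le> v x" if "x \<in> closure \<Omega>" for x unfolding v_def using NP[OF that] \<phi>nn by simp
  have claim: "w x \<le> G" if x: "x \<in> closure \<Omega>" for x
  proof (rule ccontr)
    assume "\<not> w x \<le> G"
    then have x0: "G < w x" by simp
    define S where "S = Sup (w ` closure \<Omega>)"
    have wM: "w y \<le> M" if yc: "y \<in> closure \<Omega>" for y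
      using ub[OF yc] vnn[OF yc] unfolding w_def abs_le_iff by linarith
    have bddw: "bdd_above (w ` closure \<Omega>)"
      using wM by (rule bdd_aboveI2)
    have wS: "w y \<le> S" if "y \<in> closure \<Omega>" for y
      unfolding S_def using bddw that by (intro cSup_upper) auto
    have SG: "G < S" using wS[OF x] x0 by simp
    define \<eta> where "\<eta> = min (S - G) Bc / 2"
    have eta: "0 < \<eta>" "\<eta> \<le> Bc / 2" "\<eta> \<le> (S - G)/2" unfolding \<eta>_def using SG Bc by auto
    have "S - \<eta> < Sup (w ` closure \<Omega>)" using eta unfolding S_def by simp
    moreover have "w ` closure \<Omega> \<noteq> {}" using x by auto
    ultimately obtain wx where "wx \<in> w ` closure \<Omega>" "S - \<eta> < wx" by (rule less_cSupE)
    then obtain x1 where x1: "x1 \<in> closure \<Omega>" "S - \<eta> < w x1" by blast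
    have "G < w x1" using x1 eta by simp
    have "x1 \<notin> frontier \<Omega>"
    proof
      assume fr: "x1 \<in> frontier \<Omega>"
      then have "x1 \<in> closure \<Omega>" unfolding frontier_def by simp
      then have "u x1 \<le> G" "0 \<le> v x1" using bd[OF fr] vnn by auto
      then show False using \<open>G < w x1\<close> unfolding w_def by simp
    qed
    then have x1O: "x1 \<in> \<Omega>" using x1(1) closure_Un_frontier[of \<Omega>] by auto
    define k where "k = N x1"
    have ck: "chain \<Omega> \<epsilon> x1 k" "k \<le> K" using NP[OF x1(1)] unfolding k_def by auto
    have "k \<noteq> 0"
    proof
      assume "k = 0"
      then have "x1 \<in> frontier \<Omega>" using ck(1) unfolding chain_def by auto
      then show False using \<open>x1 \<notin> frontier \<Omega>\<close> by simp
    qed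
    then obtain k' where kk: "k = Suc k'" using not0_implies_Suc by blast
    obtain z where z: "z \<in> closure \<Omega>" "intrinsic_dist \<Omega> x1 z < ereal \<epsilon>" "chain \<Omega> \<epsilon> z k'"
      using chain_tail[of \<Omega> \<epsilon> x1 k'] ck(1) kk by blast
    define Bx where "Bx = intr_ball \<Omega> x1 \<epsilon>"
    have zB: "z \<in> Bx" unfolding Bx_def intr_ball_def using z by simp
    have BxC: "Bx \<subseteq> closure \<Omega>" unfolding Bx_def intr_ball_def by auto
    have inf: "(INF y\<in>Bx. u y) \<le> \<phi> k' + S"
    proof -
      have "(INF y\<in>Bx. u y) \<le> u z"
      proof (rule cInf_lower)
        show "u z \<in> u ` Bx" using zB by simp
        have "-M \<le> u y" if "y \<in> Bx" for y using ub[of y] that BxC unfolding abs_le_iff by auto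
        then show "bdd_below (u ` Bx)" by (rule bdd_belowI2)
      qed
      also have "u z = w z + v z" unfolding w_def by simp
      also have "v z \<le> \<phi> k'" unfolding v_def using Nle[OF z(3)] ck(2) kk by (intro \<phi>mono) auto
      finally show ?thesis using wS[OF z(1)] by simp
    qed
    have sup: "(SUP y\<in>Bx. u y) \<le> \<phi> (Suc k) + S"
    proof (rule cSup_least)
      show "u ` Bx \<noteq> {}" using zB by blast
      fix r assume "r \<in> u ` Bx"
      then obtain y where y: "y \<in> Bx" "r = u y" by blast
      have yC: "y \<in> closure \<Omega>" and dy: "intrinsic_dist \<Omega> x1 y < ereal \<epsilon>"
        using y unfolding Bx_def intr_ball_def by auto
      have "intrinsic_dist \<Omega> y x1 < ereal \<epsilon>" using D_sym[of \<Omega> y x1] dy by simp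
      then have "chain \<Omega> \<epsilon> y (Suc k)" using chain_prepend[OF yC _ ck(1)] by simp
      then have "N y \<le> Suc k" by (rule Nle)
      then have "v y \<le> \<phi> (Suc k)" unfolding v_def using ck(2) by (intro \<phi>mono) auto
      then show "r \<le> \<phi> (Suc k) + S" using y wS[OF yC] unfolding w_def by simp
    qed
    have "-(\<epsilon>\<^sup>2 * F) \<le> (INF y\<in>Bx. u y) + (SUP y\<in>Bx. u y) - 2 * u x1"
      using lap[OF x1O] unfolding eps_laplacian_def Bx_def .
    also have "\<dots> \<le> \<phi> k' + \<phi> (Suc (Suc k')) + 2 * S - 2 * u x1" using inf sup kk by simp
    also have "\<dots> = -2 * Bc + 2 * (S - w x1)"
      using \<phi>2[of k'] unfolding w_def v_def k_def[symmetric] kk by simp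
    also have "\<dots> < -2 * Bc + 2 * \<eta>" using x1 by simp
    also have "\<dots> \<le> - Bc" using eta by simp
    finally show False unfolding Bc_def using e by (simp add: algebra_simps)
  qed
  fix x assume x: "x \<in> closure \<Omega>"
  have "v x \<le> \<phi> (K + 1)" unfolding v_def using NP[OF x] by (intro \<phi>mono) auto
  then show "u x \<le> G + \<epsilon>\<^sup>2 * (F + 1) * (real K + 1)\<^sup>2"
    using claim[OF x] \<phi>K unfolding w_def Bc_def by simp
qed


lemma lap_neg: "eps_laplacian \<Omega> \<epsilon> (\<lambda>y. - u y) x = - eps_laplacian \<Omega> \<epsilon> u x"
proof -
  have a: "(INF y\<in>B. - u y) = - (SUP y\<in>B. u y)" for B :: "'a set"
    by (simp add: Inf_real_def image_image)
  have b: "(SUP y\<in>B. - u y) = - (INF y\<in>B. u y)" for B :: "'a set"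
    by (simp add: Inf_real_def image_image)
  show ?thesis unfolding eps_laplacian_def a b by simp
qed

theorem lemma5p1:
  fixes \<Omega> :: "'a::euclidean_space set"
    and f g :: "'a \<Rightarrow> real"
    and \<epsilon> :: "nat \<Rightarrow> real"
    and u :: "nat \<Rightarrow> 'a \<Rightarrow> real"
  assumes domain: "open \<Omega>" "connected \<Omega>"
    and width_fin: "width \<Omega> < \<infinity>"
    and f_meas: "f \<in> borel_measurable (lebesgue_on \<Omega>)"
    and f_bdd: "bounded (f ` \<Omega>)"
    and g_cont: "continuous_on (frontier \<Omega>) g"
    and g_bdd: "bounded (g ` frontier \<Omega>)"
    and eps_pos: "\<And>i. \<epsilon> i > 0"
    and eps_lim: "\<epsilon> \<longlonglongrightarrow> 0"
    and u_bdd: "\<And>i. bounded (u i ` closure \<Omega>)"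
    and u_eq: "\<And>i x. x \<in> \<Omega> \<Longrightarrow> eps_laplacian \<Omega> (\<epsilon> i) (u i) x = (\<epsilon> i)\<^sup>2 * f x"
    and u_bdry: "\<And>i x. x \<in> frontier \<Omega> \<Longrightarrow> u i x = g x"
  shows "\<exists>M. \<forall>i. \<forall>x \<in> closure \<Omega>. \<bar>u i x\<bar> \<le> M"
proof -
  obtain F0 where F0: "\<forall>x\<in>\<Omega>. \<bar>f x\<bar> \<le> F0" using f_bdd unfolding bounded_real by auto
  define F where "F = max F0 0"
  have F: "0 \<le> F" "\<And>x. x \<in> \<Omega> \<Longrightarrow> \<bar>f x\<bar> \<le> F" using F0 unfolding F_def by auto
  obtain G where G: "\<And>x. x \<in> frontier \<Omega> \<Longrightarrow> \<bar>g x\<bar> \<le> G" using g_bdd unfolding bounded_real by auto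
  obtain E where E: "\<And>i. \<epsilon> i \<le> E"
  proof -
    have "Bseq \<epsilon>" using eps_lim by (intro convergent_imp_Bseq convergentI)
    then obtain K where "\<forall>n. norm (\<epsilon> n) \<le> K" unfolding Bseq_def by blast
    then have "\<epsilon> i \<le> K" for i by (metis abs_le_D1 real_norm_def)
    then show ?thesis using that by blast
  qed
  obtain W0 where W0: "width \<Omega> \<le> ereal W0"
  proof (cases "width \<Omega>")
    case (real r) then show ?thesis using that by auto
  next
    case PInf then show ?thesis using width_fin by simp
  next
    case MInf then show ?thesis using that by auto
  qed
  define W where "W = max W0 0"
  have W: "width \<Omega> \<le> ereal W" "0 \<le> W" using W0 unfolding W_def by (auto intro: order_trans)
  define C where "C = G + (F + 1) * (2 * (W + 1) + 3 * E)\<^sup>2"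
  have bound: "\<bar>u i x\<bar> \<le> C" if x: "x \<in> closure \<Omega>" for i x
  proof -
    define e where "e = \<epsilon> i"
    have e: "e > 0" unfolding e_def by (rule eps_pos)
    define K where "K = nat \<lceil>2 * (W + 1) / e\<rceil> + 1"
    have KK: "\<exists>k\<le>K. chain \<Omega> e y k" if "y \<in> closure \<Omega>" for y
      unfolding K_def by (rule chain_exists[OF domain(1) W e that])
    obtain M where M: "\<And>y. y \<in> closure \<Omega> \<Longrightarrow> \<bar>u i y\<bar> \<le> M"
      using u_bdd[of i] unfolding bounded_real by auto
    have M': "\<And>y. y \<in> closure \<Omega> \<Longrightarrow> \<bar>- u i y\<bar> \<le> M" using M by simp
    have lap1: "-(e\<^sup>2 * F) \<le> eps_laplacian \<Omega> e (u i) y" if "y \<in> \<Omega>" for y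
    proof -
      have "-F \<le> f y" using F(2)[OF that] by simp
      then have "e\<^sup>2 * (-F) \<le> e\<^sup>2 * f y" by (intro mult_left_mono) auto
      then show ?thesis using u_eq[OF that, of i] unfolding e_def by simp
    qed
    have lap2: "-(e\<^sup>2 * F) \<le> eps_laplacian \<Omega> e (\<lambda>y. - u i y) y" if "y \<in> \<Omega>" for y
    proof -
      have "f y \<le> F" using F(2)[OF that] by simp
      then have "e\<^sup>2 * f y \<le> e\<^sup>2 * F" by (intro mult_left_mono) auto
      then show ?thesis using u_eq[OF that, of i] unfolding e_def lap_neg by simp
    qed
    have bd1: "u i y \<le> G" if "y \<in> frontier \<Omega>" for y using G[OF that] u_bdry[OF that, of i] by simp
    have bd2: "- u i y \<le> G" if "y \<in> frontier \<Omega>" for y using G[OF that] u_bdry[OF that, of i] by simp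
    have up: "u i x \<le> G + e\<^sup>2 * (F + 1) * (real K + 1)\<^sup>2"
      by (rule comparison[OF domain(1) e KK M lap1 F(1) bd1 x])
    have lo: "- u i x \<le> G + e\<^sup>2 * (F + 1) * (real K + 1)\<^sup>2"
      by (rule comparison[OF domain(1) e KK M' lap2 F(1) bd2 x])
    have "e * (real K + 1) \<le> 2 * (W + 1) + 3 * E"
    proof -
      have "real (nat \<lceil>2 * (W + 1) / e\<rceil>) \<le> 2 * (W + 1) / e + 1"
        using W(2) e by (simp add: of_nat_nat)
      then have "real K + 1 \<le> 2 * (W + 1) / e + 3" unfolding K_def by simp
      then have "e * (real K + 1) \<le> e * (2 * (W + 1) / e + 3)" using e by (intro mult_left_mono) auto
      also have "\<dots> = 2 * (W + 1) + 3 * e" using e by (simp add: field_simps)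
      also have "\<dots> \<le> 2 * (W + 1) + 3 * E" using E[of i] unfolding e_def by simp
      finally show ?thesis .
    qed
    then have "(e * (real K + 1))\<^sup>2 \<le> (2 * (W + 1) + 3 * E)\<^sup>2"
      using e by (intro power_mono) auto
    then have "e\<^sup>2 * (F + 1) * (real K + 1)\<^sup>2 \<le> (F + 1) * (2 * (W + 1) + 3 * E)\<^sup>2"
    proof -
      have "e\<^sup>2 * (F + 1) * (real K + 1)\<^sup>2 = (F + 1) * (e * (real K + 1))\<^sup>2"
        by (simp add: power_mult_distrib)
      also have "\<dots> \<le> (F + 1) * (2 * (W + 1) + 3 * E)\<^sup>2"
        using F(1) \<open>(e * (real K + 1))\<^sup>2 \<le> _\<close> by (intro mult_left_mono) auto
      finally show ?thesis .
    qed
    then show ?thesis using up lo unfolding C_def by (simp add: abs_le_iff)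
  qed
  then show ?thesis by blast
qed

end
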